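(* Let $k\ge1$, $n\ge 2k+1$ and $x\in X_{n,k}$. Then $W(f(x))=W(x)$ as multisets; consequently $W$ is constant along the cycle $C(x)=(x,f(x),f^2(x),\dots)$.
   Context: $X_{n,k}$: binary strings of length $n$ with $k$ ones, positions cyclic mod $n$. Cyclic parenthesis matching: $1$s are opening, $0$s closing brackets; each $1$ at position $i$ is matched to the last $0$ of the shortest cyclic substring starting at $i$ going right with equally many $0$s and $1$s; all $1$s are matched and $n-2k\ge1$ zeros are unmatched. $f(x)$ is obtained from $x$ by complementing all matched bits. A block of $x$ is a maximal cyclic substring of matched bits; each block is a nonempty Dyck word. $D$ is the set of Dyck words (equally many $0$s and $1$s, at least as many $1$s as $0$s in every prefix), including $\varepsilon$; $D'=\{1\,u\,0:u\in D\}$; every nonempty $y\in D$ factors uniquely as $y=y_1\cdots y_\ell$ with $y_i\in D'$. For a nonempty multiset $X$ of positive integers, $X\oplus 1$ increases one largest element by $1$. Define: for $y=1u0\in D'$, $W(y)=\{1\}$ if $u=\varepsilon$, else $W(u)\oplus1$; for nonempty $y\in D\setminus D'$, $W(y)=\bigcup_i W(y_i)$; $W(x)=\bigcup_{y\text{ block of }x}W(y)$ (multiset unions). *)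

theory Defs
  imports Main "HOL-Library.Multiset"
begin

text \<open>Binary strings are lists of booleans; True = 1 (opening bracket), False = 0.\<close>

definition bin_strings :: "nat \<Rightarrow> nat \<Rightarrow> bool list set" where
  "bin_strings n k = {x. length x = n \<and> count_list x True = k}"

definition bal :: "bool list \<Rightarrow> int" where
  "bal xs = sum_list (map (\<lambda>b. if b then 1 else -1) xs)"

definition cyc :: "bool list \<Rightarrow> nat \<Rightarrow> nat \<Rightarrow> bool list" where
  "cyc x i j = map (\<lambda>t. x ! ((i + t) mod length x)) [0..<j]"

definition match_len :: "bool list \<Rightarrow> nat \<Rightarrow> nat" where
  "match_len x i = (LEAST j. 0 < j \<and> bal (cyc x i j) = 0)"

definition match_pos :: "bool list \<Rightarrow> nat \<Rightarrow> nat" where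
  "match_pos x i = (i + match_len x i - 1) mod length x"

definition matched :: "bool list \<Rightarrow> nat set" where
  "matched x = {i. i < length x \<and> x ! i} \<union> {match_pos x i | i. i < length x \<and> x ! i}"

definition f :: "bool list \<Rightarrow> bool list" where
  "f x = map (\<lambda>i. if i \<in> matched x then \<not> x ! i else x ! i) [0..<length x]"

fun runs :: "(bool \<times> bool) list \<Rightarrow> bool list \<Rightarrow> bool list list" where
  "runs [] acc = (if acc = [] then [] else [rev acc])"
| "runs ((b, m) # ys) acc =
     (if m then runs ys (b # acc)
      else (if acc = [] then [] else [rev acc]) @ runs ys [])"

text \<open>Blocks: maximal cyclic runs of matched bits. We rotate so that the string starts
  at an unmatched position (which exists since n - 2k \<ge> 1); then cyclic runs are linear runs.\<close>
definition blocks :: "bool list \<Rightarrow> bool list list" where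
  "blocks x = (let u = (LEAST i. i < length x \<and> i \<notin> matched x) in
     runs (rotate u (zip x (map (\<lambda>i. i \<in> matched x) [0..<length x]))) [])"

definition plus_one :: "nat multiset \<Rightarrow> nat multiset" where
  "plus_one X = X - {# Max (set_mset X) #} + {# Max (set_mset X) + 1 #}"

text \<open>Length of the first prime factor in D' of a Dyck word (first return to balance 0).\<close>
definition first_return :: "bool list \<Rightarrow> nat" where
  "first_return y = (if \<exists>j. 0 < j \<and> j \<le> length y \<and> bal (take j y) = 0
     then (LEAST j. 0 < j \<and> bal (take j y) = 0) else length y)"

text \<open>W on nonempty Dyck words: for y = y_1 ... y_l (l \<ge> 2) take the union W(y_1) + W(y_2 ... y_l);
  for y = 1u0 in D' take {1} if u is empty, else W(u) \<oplus> 1.\<close>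
function Wd :: "bool list \<Rightarrow> nat multiset" where
  "Wd y = (if y = [] then {#} else
     (let j = first_return y in
      if 0 < j \<and> j < length y then Wd (take j y) + Wd (drop j y)
      else if butlast (tl y) = [] then {#1#}
      else plus_one (Wd (butlast (tl y)))))"
  by pat_completeness auto
termination
  by (relation "measure length") auto

definition W :: "bool list \<Rightarrow> nat multiset" where
  "W x = sum_list (map Wd (blocks x))"

end

theory Submission
  imports Defs
begin


declare Wd.simps[simp del]

abbreviation ones :: "bool list \<Rightarrow> nat" where "ones xs \<equiv> count_list xs True"

lemma bal_Nil[simp]: "bal [] = 0" by (simp add: bal_def)
lemma bal_Cons[simp]: "bal (x # xs) = (if x then 1 else -1) + bal xs" by (simp add: bal_def)
lemma bal_append[simp]: "bal (xs @ ys) = bal xs + bal ys" by (simp add: bal_def)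
lemma bal_count: "bal xs = int (count_list xs True) - int (count_list xs False)"
  by (induction xs) auto

lemma count_len: "count_list xs True + count_list xs False = length xs"
  by (induction xs) auto

definition dyck :: "bool list \<Rightarrow> bool" where
  "dyck D \<longleftrightarrow> bal D = 0 \<and> (\<forall>j. 0 \<le> bal (take j D))"

lemma dyck_Nil[simp]: "dyck []" by (simp add: dyck_def)

lemma dyck_hd: "dyck D \<Longrightarrow> D \<noteq> [] \<Longrightarrow> hd D"
proof -
  assume d: "dyck D" and ne: "D \<noteq> []"
  then obtain a l where D: "D = a # l" by (cases D) auto
  have "0 \<le> bal (take 1 D)" using d by (simp add: dyck_def)
  then show ?thesis using D by (cases a) auto
qed

lemma bal_take_butlast: "xs \<noteq> [] \<Longrightarrow> bal xs = bal (butlast xs) + (if last xs then 1 else -1)"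
  by (metis append_butlast_last_id bal_Cons bal_Nil bal_append add.right_neutral)

lemma dyck_last: "dyck D \<Longrightarrow> D \<noteq> [] \<Longrightarrow> \<not> last D"
proof -
  assume d: "dyck D" and ne: "D \<noteq> []"
  have "0 \<le> bal (take (length D - 1) D)" using d by (simp add: dyck_def)
  moreover have "take (length D - 1) D = butlast D" by (simp add: butlast_conv_take)
  ultimately show ?thesis using d ne bal_take_butlast[OF ne] by (auto simp: dyck_def split: if_splits)
qed

lemma dyck_append: "dyck A \<Longrightarrow> dyck B \<Longrightarrow> dyck (A @ B)"
  unfolding dyck_def by (auto simp: take_append)

lemma dyck_prime: "dyck u \<Longrightarrow> dyck (True # u @ [False])"
proof -
  assume d: "dyck u"
  have "0 \<le> bal (take j (True # u @ [False]))" for j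
  proof (cases j)
    case (Suc i)
    show ?thesis
    proof (cases "i \<le> length u")
      case True
      then have "take j (True # u @ [False]) = True # take i u" using Suc by simp
      then show ?thesis using d by (simp add: dyck_def)
    next
      case False
      then have "take j (True # u @ [False]) = True # u @ [False]" using Suc by simp
      then show ?thesis using d by (simp add: dyck_def)
    qed
  qed simp
  then show ?thesis using d by (simp add: dyck_def)
qed

lemma dyck_ones: "dyck D \<Longrightarrow> 2 * ones D = length D"
  using bal_count[of D] count_len[of D] by (auto simp: dyck_def)

lemma dyck_decomp:
  assumes d: "dyck D" and ne: "D \<noteq> []"
  shows "(\<exists>u. dyck u \<and> D = True # u @ [False]) \<or>
         (\<exists>A B. dyck A \<and> dyck B \<and> A \<noteq> [] \<and> B \<noteq> [] \<and> D = A @ B)"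
proof -
  define P where "P j \<longleftrightarrow> 0 < j \<and> bal (take j D) = 0" for j
  have PD: "P (length D)" using d ne by (auto simp: P_def dyck_def)
  define j where "j = (LEAST j. P j)"
  have Pj: "P j" unfolding j_def by (rule LeastI[of P, OF PD])
  have jle: "j \<le> length D" unfolding j_def by (rule Least_le[of P, OF PD])
  have min: "\<And>i. 0 < i \<Longrightarrow> i < j \<Longrightarrow> bal (take i D) \<noteq> 0"
    using not_less_Least[of _ P] unfolding j_def P_def by blast
  have nn: "\<And>i. 0 \<le> bal (take i D)" using d by (auto simp: dyck_def)
  show ?thesis
  proof (cases "j < length D")
    case True
    let ?A = "take j D" and ?B = "drop j D"
    have "dyck ?A" using Pj nn by (auto simp: dyck_def P_def min_def)
    moreover have "dyck ?B"
    proof -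
      have "bal ?B = 0" using d Pj by (auto simp: dyck_def P_def)
        (metis add.left_neutral append_take_drop_id bal_append)
      moreover have "0 \<le> bal (take i ?B)" for i
      proof -
        have "take (j + i) D = ?A @ take i ?B" by (simp add: take_add)
        then show ?thesis using nn[of "j+i"] Pj by (simp add: P_def)
      qed
      ultimately show ?thesis by (simp add: dyck_def)
    qed
    moreover have "?A \<noteq> []" "?B \<noteq> []" using True Pj by (auto simp: P_def)
    moreover have "D = ?A @ ?B" by simp
    ultimately show ?thesis by blast
  next
    case False
    hence jD: "j = length D" using jle by simp
    have h: "hd D" using dyck_hd[OF d ne] .
    have l: "\<not> last D" using dyck_last[OF d ne] .
    obtain y ys where D1: "D = y # ys" using ne by (cases D) auto
    have y: "y" using h D1 by simp
    have ysne: "ys \<noteq> []" using D1 y l by auto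
    have lys: "\<not> last ys" using l D1 ysne by simp
    define u where "u = butlast ys"
    have Du: "D = True # u @ [False]"
      using D1 y ysne lys append_butlast_last_id[of ys] unfolding u_def by (cases "last ys") auto
    have "dyck u"
    proof -
      have "bal u = 0" using d Du by (simp add: dyck_def)
      moreover have "0 \<le> bal (take i u)" for i
      proof (cases "i < length u")
        case True
        have "take (Suc i) D = True # take i u" using Du True by simp
        moreover have "bal (take (Suc i) D) \<noteq> 0" using min[of "Suc i"] True jD Du by simp
        moreover have "0 \<le> bal (take (Suc i) D)" using nn by blast
        ultimately show ?thesis by simp
      next
        case False
        then show ?thesis using \<open>bal u = 0\<close> by simp
      qed
      ultimately show ?thesis by (simp add: dyck_def)
    qed
    then show ?thesis using Du by blast
  qed
qed

lemma dyck_induct[consumes 1, case_names Nil prime app]: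
  assumes "dyck D"
    and "P []"
    and "\<And>u. dyck u \<Longrightarrow> P u \<Longrightarrow> P (True # u @ [False])"
    and "\<And>A B. dyck A \<Longrightarrow> dyck B \<Longrightarrow> A \<noteq> [] \<Longrightarrow> B \<noteq> [] \<Longrightarrow> P A \<Longrightarrow> P B \<Longrightarrow> P (A @ B)"
  shows "P D"
  using assms(1)
proof (induction "length D" arbitrary: D rule: less_induct)
  case less
  show ?case
  proof (cases "D = []")
    case True then show ?thesis using assms(2) by simp
  next
    case False
    from dyck_decomp[OF less.prems False] show ?thesis
    proof
      assume "\<exists>u. dyck u \<and> D = True # u @ [False]"
      then obtain u where "dyck u" "D = True # u @ [False]" by blast
      then show ?thesis using less assms(3) by simp
    next
      assume "\<exists>A B. dyck A \<and> dyck B \<and> A \<noteq> [] \<and> B \<noteq> [] \<and> D = A @ B"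
      then obtain A B where "dyck A" "dyck B" "A \<noteq> []" "B \<noteq> []" "D = A @ B" by blast
      then show ?thesis using less assms(4) by simp
    qed
  qed
qed

lemma first_return_prime:
  assumes "dyck u"
  shows "first_return (True # u @ False # B) = length u + 2"
proof -
  let ?y = "True # u @ False # B"
  have w: "0 < length u + 2 \<and> length u + 2 \<le> length ?y \<and> bal (take (length u + 2) ?y) = 0"
    using assms by (simp add: dyck_def)
  have L: "(LEAST j. 0 < j \<and> bal (take j ?y) = 0) = length u + 2"
  proof (rule Least_equality)
    show "0 < length u + 2 \<and> bal (take (length u + 2) ?y) = 0" using w by simp
  next
    fix j assume j: "0 < j \<and> bal (take j ?y) = 0"
    show "length u + 2 \<le> j"
    proof (rule ccontr)
      assume "\<not> ?thesis"
      then obtain i where i: "j = Suc i" "i \<le> length u" using j by (cases j) auto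
      have "take j ?y = True # take i u" using i by simp
      then have "bal (take j ?y) = 1 + bal (take i u)" by simp
      moreover have "0 \<le> bal (take i u)" using assms by (simp add: dyck_def)
      ultimately show False using j by simp
    qed
  qed
  have ex: "\<exists>j. 0 < j \<and> j \<le> length ?y \<and> bal (take j ?y) = 0" using w by blast
  have "first_return ?y = (LEAST j. 0 < j \<and> bal (take j ?y) = 0)"
    unfolding first_return_def using ex by (rule if_P)
  then show ?thesis using L by (rule trans)
qed

lemma Wd_Nil[simp]: "Wd [] = {#}" by (subst Wd.simps) simp

lemma Wd_prime: "dyck u \<Longrightarrow> Wd (True # u @ [False]) = (if u = [] then {#1#} else plus_one (Wd u))"
  using first_return_prime[of u "[]"] by (subst Wd.simps) (simp add: Let_def)

lemma Wd_prime_app: "dyck u \<Longrightarrow> B \<noteq> [] \<Longrightarrow> Wd (True # u @ False # B) = Wd (True # u @ [False]) + Wd B"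
  using first_return_prime[of u B] by (subst Wd.simps) (simp add: Let_def)

lemma Wd_append: "dyck A \<Longrightarrow> dyck B \<Longrightarrow> Wd (A @ B) = Wd A + Wd B"
proof (induction A arbitrary: B rule: dyck_induct)
  case Nil then show ?case by simp
next
  case (prime u)
  then show ?case by (cases "B = []") (auto simp: Wd_prime_app)
next
  case (app A1 A2)
  have "Wd (A1 @ A2 @ B) = Wd A1 + Wd (A2 @ B)" using app dyck_append by blast
  also have "\<dots> = Wd A1 + Wd A2 + Wd B" using app by simp
  finally show ?case using app by simp
qed

lemma Wd_nonempty: "dyck D \<Longrightarrow> D \<noteq> [] \<Longrightarrow> Wd D \<noteq> {#}"
proof (induction D rule: dyck_induct)
  case (prime u) then show ?case
    by (auto simp: Wd_prime plus_one_def)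
next
  case (app A B) then show ?case by (simp add: Wd_append)
qed simp



fun Rl :: "bool list \<Rightarrow> bool list" where
  "Rl (True # False # xs) = Rl xs"
| "Rl (x # xs) = x # Rl xs"
| "Rl [] = []"

fun Rn :: "bool list \<Rightarrow> bool list" where
  "Rn (False # True # xs) = Rn xs"
| "Rn (x # xs) = x # Rn xs"
| "Rn [] = []"

lemma Rl_append:
  "xs = [] \<or> ys = [] \<or> \<not> last xs \<or> hd ys \<Longrightarrow> Rl (xs @ ys) = Rl xs @ Rl ys"
  by (induction xs rule: Rl.induct; cases ys) (auto split: if_splits)

lemma Rl_map_Not: "Rl (map Not xs) = map Not (Rn xs)"
  by (induction xs rule: Rn.induct) auto

lemma Rl_Rn_shift: "Rl (True # E) = Rn (E @ [True])"
proof (induction "length E" arbitrary: E rule: less_induct)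
  case less
  show ?case
  proof (cases E)
    case Nil then show ?thesis by simp
  next
    case (Cons a E')
    show ?thesis
    proof (cases a)
      case True
      then show ?thesis using less Cons by simp
    next
      case False
      show ?thesis
      proof (cases E')
        case Nil then show ?thesis using Cons False by simp
      next
        case (Cons b E'')
        show ?thesis
        proof (cases b)
          case True
          then show ?thesis using less \<open>E = a # E'\<close> False Cons by simp
        next
          case b: False
          have "Rl (True # False # E'') = Rn ((False # E'') @ [True])"
            using less.hyps[of "False # E''"] \<open>E = a # E'\<close> Cons by simp
          then show ?thesis using \<open>E = a # E'\<close> False Cons b by simp
        qed
      qed
    qed
  qed
qed

lemma Rl_compl:
  assumes "D = [] \<or> hd D"
  shows "Rl (map Not D @ [False]) = False # map Not (Rl D)"
proof (cases D)
  case Nil then show ?thesis by simp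
next
  case (Cons a E)
  then have a: "a" using assms by simp
  have "map Not D @ [False] = map Not (D @ [True])" by simp
  then have "Rl (map Not D @ [False]) = map Not (Rn (D @ [True]))" by (simp only: Rl_map_Not)
  also have "Rn (D @ [True]) = True # Rn (E @ [True])" using Cons a by simp
  also have "Rn (E @ [True]) = Rl D" using Cons a Rl_Rn_shift by simp
  finally show ?thesis by simp
qed

lemma ones_Rl_le: "ones (Rl xs) \<le> ones xs"
  by (induction xs rule: Rl.induct) auto

lemma Rl_prime_ne: "u \<noteq> [] \<Longrightarrow> hd u \<Longrightarrow> \<not> last u \<Longrightarrow> Rl (True # u @ [False]) = True # Rl u @ [False]"
proof -
  assume u: "u \<noteq> []" "hd u" "\<not> last u"
  then obtain u' where u': "u = True # u'" by (cases u) auto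
  have "Rl (True # u @ [False]) = True # Rl (u @ [False])" using u' by simp
  also have "Rl (u @ [False]) = Rl u @ [False]" using u by (subst Rl_append) auto
  finally show ?thesis .
qed

lemma ones_dyck_pos: "dyck u \<Longrightarrow> u \<noteq> [] \<Longrightarrow> 1 \<le> ones u"
  using dyck_hd[of u] by (cases u) auto

definition Phi :: "nat multiset \<Rightarrow> nat \<Rightarrow> nat multiset" where
  "Phi X c = image_mset Suc X + replicate_mset c 1"

lemma plus_one_Phi:
  assumes "X \<noteq> {#}"
  shows "plus_one (Phi X c) = Phi (plus_one X) c"
proof -
  let ?M = "Max (set_mset X)"
  have MX: "?M \<in># X" using assms by auto
  have fin: "finite (set_mset (Phi X c))" by simp
  have MPhi: "Max (set_mset (Phi X c)) = Suc ?M"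
  proof (rule Max_eqI)
    show "Suc ?M \<in> set_mset (Phi X c)" using MX by (auto simp: Phi_def)
  next
    fix y assume "y \<in> set_mset (Phi X c)"
    then show "y \<le> Suc ?M" unfolding Phi_def
      by (auto split: if_splits)
  qed simp
  have "plus_one (Phi X c) = Phi X c - {#Suc ?M#} + {#Suc ?M + 1#}"
    unfolding plus_one_def MPhi ..
  also have "\<dots> = image_mset Suc (X - {#?M#} + {#?M + 1#}) + replicate_mset c 1"
    using MX unfolding Phi_def by (simp add: image_mset_Diff)
  finally show ?thesis unfolding Phi_def plus_one_def .
qed

lemma size_plus_one: "X \<noteq> {#} \<Longrightarrow> size (plus_one X) = size X"
proof -
  assume "X \<noteq> {#}"
  then have "Max (set_mset X) \<in># X" by auto
  moreover have "0 < size X" using \<open>X \<noteq> {#}\<close> by (cases X) auto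
  ultimately show ?thesis unfolding plus_one_def by (simp add: size_Diff_submset)
qed

lemma plus_one_rep: "1 \<le> c \<Longrightarrow> plus_one (replicate_mset c (1::nat)) = replicate_mset (c - 1) 1 + {#2#}"
proof -
  assume "1 \<le> c"
  then obtain c' where c: "c = Suc c'" by (cases c) auto
  have "set_mset (replicate_mset c (1::nat)) = {1}" using c by simp
  then show ?thesis unfolding plus_one_def using c by simp
qed

lemma rep_add: "replicate_mset (a + b) x = replicate_mset a x + replicate_mset b x"
  by (induction a) auto

lemma dyck_TF[simp]: "dyck [True, False]" using dyck_prime[of "[]"] by simp

lemma Wd_TF[simp]: "Wd [True, False] = {#1#}" using Wd_prime[of "[]"] by simp

lemma plus_one_rep': "Suc 0 \<le> c \<Longrightarrow> plus_one (replicate_mset c (Suc 0)) = add_mset 2 (replicate_mset (c - Suc 0) (Suc 0))"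
  using plus_one_rep[of c] by simp

lemma Phi_add: "Phi X a + Phi Y b = Phi (X + Y) (a + b)"
  unfolding Phi_def by (simp add: rep_add)

lemma R2: "dyck D \<Longrightarrow> dyck (Rl D) \<and> ones (Rl D) + size (Wd (Rl D)) \<le> ones D \<and>
   Wd D = Phi (Wd (Rl D)) (ones D - ones (Rl D) - size (Wd (Rl D)))"
proof (induction D rule: dyck_induct)
  case Nil then show ?case by (simp add: Phi_def)
next
  case (prime u)
  show ?case
  proof (cases "u = []")
    case True then show ?thesis by (simp add: Wd_prime Phi_def dyck_def)
  next
    case False
    have hu: "hd u" and lu: "\<not> last u" using dyck_hd dyck_last prime False by auto
    have RD: "Rl (True # u @ [False]) = True # Rl u @ [False]" using Rl_prime_ne False hu lu by blast
    have o1: "1 \<le> ones u" using ones_dyck_pos prime False by blast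
    show ?thesis
    proof (cases "Rl u = []")
      case True
      have Wu: "Wd u = replicate_mset (ones u) 1" using prime True by (simp add: Phi_def)
      have "Wd (True # u @ [False]) = replicate_mset (ones u - 1) 1 + {#2#}"
        using Wu prime False o1 by (simp add: Wd_prime plus_one_rep')
      moreover have "Wd [True, False] = {#1#}" using Wd_prime[of "[]"] by simp
      ultimately show ?thesis using RD True o1 by (simp add: Phi_def)
    next
      case Rne: False
      let ?X = "Wd (Rl u)"
      have dR: "dyck (Rl u)" using prime by blast
      have Xne: "?X \<noteq> {#}" using Wd_nonempty dR Rne by blast
      have WRD: "Wd (Rl (True # u @ [False])) = plus_one ?X" using RD Wd_prime[OF dR] Rne by simp
      have "Wd (True # u @ [False]) = plus_one (Wd u)" using Wd_prime prime False by simp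
      also have "\<dots> = plus_one (Phi ?X (ones u - ones (Rl u) - size ?X))" using prime by simp
      also have "\<dots> = Phi (plus_one ?X) (ones u - ones (Rl u) - size ?X)" using plus_one_Phi Xne by blast
      finally show ?thesis using WRD RD prime size_plus_one[OF Xne] dyck_prime[OF dR] by simp
    qed
  qed
next
  case (app A B)
  have lA: "\<not> last A" using dyck_last app by blast
  have RAB: "Rl (A @ B) = Rl A @ Rl B" using lA by (intro Rl_append) simp
  have W: "Wd (Rl A @ Rl B) = Wd (Rl A) + Wd (Rl B)" using app Wd_append by blast
  have "Wd (A @ B) = Phi (Wd (Rl A)) (ones A - ones (Rl A) - size (Wd (Rl A))) +
     Phi (Wd (Rl B)) (ones B - ones (Rl B) - size (Wd (Rl B)))" using app Wd_append by simp
  also have "\<dots> = Phi (Wd (Rl A) + Wd (Rl B)) ((ones A - ones (Rl A) - size (Wd (Rl A))) + (ones B - ones (Rl B) - size (Wd (Rl B))))"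
    by (simp add: Phi_add)
  also have "(ones A - ones (Rl A) - size (Wd (Rl A))) + (ones B - ones (Rl B) - size (Wd (Rl B)))
     = ones (A @ B) - ones (Rl A @ Rl B) - size (Wd (Rl A) + Wd (Rl B))"
    using app by simp
  finally show ?case using RAB W app dyck_append by simp
qed



definition H :: "bool list \<Rightarrow> nat \<Rightarrow> int" where "H z j = bal (take j z)"

lemma H_0[simp]: "H z 0 = 0" by (simp add: H_def)

lemma H_Suc: "j < length z \<Longrightarrow> H z (Suc j) = H z j + (if z ! j then 1 else -1)"
  by (simp add: H_def take_Suc_conv_app_nth)

lemma H_ge: "length z \<le> j \<Longrightarrow> H z j = bal z"
  by (simp add: H_def)

lemma H_step: "H z (Suc t) \<le> H z t + 1 \<and> H z t \<le> H z (Suc t) + 1"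
  by (cases "t < length z") (auto simp: H_Suc H_ge)

lemma H_append: "H (xs @ ys) t = (if t \<le> length xs then H xs t else bal xs + H ys (t - length xs))"
  by (simp add: H_def take_append)

lemma ivt_down:
  fixes g :: "nat \<Rightarrow> int"
  assumes step: "\<And>t. g (Suc t) \<le> g t + 1 \<and> g t \<le> g (Suc t) + 1"
  shows "a \<le> b \<Longrightarrow> c \<le> g a \<Longrightarrow> g b \<le> c \<Longrightarrow> \<exists>t. a \<le> t \<and> t \<le> b \<and> g t = c"
proof (induction b)
  case 0 then show ?case by auto
next
  case (Suc b)
  show ?case
  proof (cases "a = Suc b")
    case True then show ?thesis using Suc by auto
  next
    case False
    then have ab: "a \<le> b" using Suc by simp
    show ?thesis
    proof (cases "g b \<le> c")
      case True then show ?thesis using Suc ab by (meson le_SucI)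
    next
      case False
      then have "g (Suc b) = c" using step[of b] Suc.prems by simp
      then show ?thesis using Suc.prems by auto
    qed
  qed
qed

lemma ivt_up:
  fixes g :: "nat \<Rightarrow> int"
  assumes step: "\<And>t. g (Suc t) \<le> g t + 1 \<and> g t \<le> g (Suc t) + 1"
  shows "a \<le> b \<Longrightarrow> g a \<le> c \<Longrightarrow> c \<le> g b \<Longrightarrow> \<exists>t. a \<le> t \<and> t \<le> b \<and> g t = c"
proof -
  assume p: "a \<le> b" "g a \<le> c" "c \<le> g b"
  have "\<exists>t. a \<le> t \<and> t \<le> b \<and> (\<lambda>t. - g t) t = - c"
    apply (rule ivt_down[where g="\<lambda>t. - g t"])
    using step p by (auto simp: algebra_simps)
  then show ?thesis by auto
qed

definition K :: "bool list \<Rightarrow> bool" where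
  "K z \<longleftrightarrow> (\<forall>t < length z. H z (length z) < H z t)"

lemma cyc_take: "i + j \<le> length z \<Longrightarrow> cyc z i j = take j (drop i z)"
  unfolding cyc_def by (rule nth_equalityI) auto

lemma bal_cyc: "i + j \<le> length z \<Longrightarrow> bal (cyc z i j) = H z (i + j) - H z i"
proof -
  assume a: "i + j \<le> length z"
  have "take (i + j) z = take i z @ take j (drop i z)" by (simp add: take_add)
  then show ?thesis using cyc_take[OF a] by (simp add: H_def)
qed

lemma match_len_eq:
  assumes q: "i \<le> q" "q < length z" and e: "H z (Suc q) = H z i"
    and ne: "\<And>t. i < t \<Longrightarrow> t \<le> q \<Longrightarrow> H z t \<noteq> H z i"
  shows "match_len z i = Suc q - i"
  unfolding match_len_def
proof (rule Least_equality)
  show "0 < Suc q - i \<and> bal (cyc z i (Suc q - i)) = 0"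
    using q e by (simp add: bal_cyc)
next
  fix y assume y: "0 < y \<and> bal (cyc z i y) = 0"
  show "Suc q - i \<le> y"
  proof (rule ccontr)
    assume "\<not> ?thesis"
    then have "i + y \<le> q" "i < i + y" using y by auto
    then show False using y ne[of "i + y"] q by (simp add: bal_cyc)
  qed
qed

lemma matched_char:
  assumes "K z"
  shows "matched z = {q. q < length z \<and> (\<exists>t\<le>q. H z t \<le> H z (Suc q))}"
    and "\<And>i. i < length z \<Longrightarrow> z ! i \<Longrightarrow> 0 < match_len z i"
proof -
  let ?n = "length z"
  have one: "match_pos z i < ?n \<and> (\<exists>t\<le>match_pos z i. H z t \<le> H z (Suc (match_pos z i))) \<and> 0 < match_len z i"
    if i: "i < ?n" "z ! i" for i
  proof -
    have Hi1: "H z (Suc i) = H z i + 1" using i by (simp add: H_Suc)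
    have Hn: "H z ?n < H z i" using assms i by (simp add: K_def)
    obtain t where t: "Suc i \<le> t" "t \<le> ?n" "H z t = H z i"
      using ivt_down[where g="H z", OF H_step, of "Suc i" ?n "H z i"] Hi1 Hn i by force
    define T where "T = (LEAST t. i < t \<and> H z t = H z i)"
    have PT: "i < T \<and> H z T = H z i" unfolding T_def by (rule LeastI[of _ t]) (use t in auto)
    have Tle: "T \<le> t" unfolding T_def by (rule Least_le) (use t in auto)
    have ne: "\<And>s. i < s \<Longrightarrow> s < T \<Longrightarrow> H z s \<noteq> H z i"
      using not_less_Least unfolding T_def by blast
    obtain q where qT: "T = Suc q" using PT by (cases T) auto
    have ml: "match_len z i = Suc q - i"
      by (rule match_len_eq) (use PT qT t Tle ne in auto)
    have mp: "match_pos z i = q"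
      unfolding match_pos_def ml using PT qT t Tle by auto
    show ?thesis using mp PT qT t Tle ml by (auto intro!: exI[of _ i])
  qed
  show "\<And>i. i < length z \<Longrightarrow> z ! i \<Longrightarrow> 0 < match_len z i" using one by blast
  show "matched z = {q. q < length z \<and> (\<exists>t\<le>q. H z t \<le> H z (Suc q))}"
  proof (intro set_eqI iffI)
    fix q assume "q \<in> matched z"
    then consider "q < ?n" "z ! q" | i where "i < ?n" "z ! i" "q = match_pos z i"
      unfolding matched_def by blast
    then show "q \<in> {q. q < length z \<and> (\<exists>t\<le>q. H z t \<le> H z (Suc q))}"
    proof cases
      case 1 then show ?thesis by (auto simp: H_Suc intro!: exI[of _ q])
    next
      case 2 then show ?thesis using one by auto
    qed
  next
    fix q assume "q \<in> {q. q < length z \<and> (\<exists>t\<le>q. H z t \<le> H z (Suc q))}"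
    then have q: "q < ?n" and ex: "\<exists>t\<le>q. H z t \<le> H z (Suc q)" by auto
    show "q \<in> matched z"
    proof (cases "z ! q")
      case True then show ?thesis using q unfolding matched_def by blast
    next
      case False
      let ?c = "H z (Suc q)"
      have Hq: "H z q = ?c + 1" using False q by (simp add: H_Suc)
      define i where "i = (GREATEST t. t \<le> q \<and> H z t \<le> ?c)"
      have Pi: "i \<le> q \<and> H z i \<le> ?c" unfolding i_def
      proof (rule GreatestI_ex_nat[where b = q])
        show "\<exists>k. k \<le> q \<and> H z k \<le> ?c" using ex by blast
      qed blast
      have gr: "\<And>t. t \<le> q \<Longrightarrow> H z t \<le> ?c \<Longrightarrow> t \<le> i" unfolding i_def
        by (rule Greatest_le_nat[where b = q]) blast+
      have Hi: "H z i = ?c"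
      proof (rule ccontr)
        assume "H z i \<noteq> ?c"
        then have "H z i < ?c" using Pi by simp
        then obtain t where t: "i \<le> t" "t \<le> q" "H z t = ?c"
          using ivt_up[where g="H z", OF H_step, of i q ?c] Pi Hq \<open>H z i < ?c\<close> by force
        then have "t = i" using gr[of t] by simp
        then show False using t \<open>H z i \<noteq> ?c\<close> by simp
      qed
      have iq: "i < q" using Pi Hi Hq by (cases "i = q") auto
      have above: "\<And>t. i < t \<Longrightarrow> t \<le> q \<Longrightarrow> H z t \<noteq> H z i"
        using gr Hi by (metis not_le order_refl)
      have zi: "z ! i"
      proof (rule ccontr)
        assume "\<not> z ! i"
        then have "H z (Suc i) = H z i - 1" using iq q by (simp add: H_Suc)
        then show False using gr[of "Suc i"] iq Hi by simp
      qed
      have ml: "match_len z i = Suc q - i"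
        by (rule match_len_eq) (use iq q Hi above in auto)
      have "match_pos z i = q" unfolding match_pos_def ml using iq q by auto
      then show ?thesis using zi iq q unfolding matched_def by auto
    qed
  qed
qed



definition cz :: "bool list list \<Rightarrow> bool list" where
  "cz Ds = concat (map (\<lambda>D. D @ [False]) Ds)"
definition fl :: "bool list list \<Rightarrow> bool list" where
  "fl Ds = concat (map (\<lambda>D. replicate (length D) True @ [False]) Ds)"
definition G :: "bool list list \<Rightarrow> (bool \<times> bool) list" where
  "G Ds = concat (map (\<lambda>D. map (\<lambda>b. (b, True)) D @ [(False, False)]) Ds)"

lemma cz_Nil[simp]: "cz [] = []" and cz_Cons[simp]: "cz (D # Ds) = D @ False # cz Ds"
  by (auto simp: cz_def)
lemma fl_Nil[simp]: "fl [] = []" and fl_Cons[simp]: "fl (D # Ds) = replicate (length D) True @ False # fl Ds"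
  by (auto simp: fl_def)
lemma G_Nil[simp]: "G [] = []" and G_Cons[simp]: "G (D # Ds) = map (\<lambda>b. (b, True)) D @ (False, False) # G Ds"
  by (auto simp: G_def)

lemma length_fl: "length (fl Ds) = length (cz Ds)"
  by (induction Ds) auto

lemma bal_cz: "\<forall>D\<in>set Ds. dyck D \<Longrightarrow> bal (cz Ds) = - int (length Ds)"
proof (induction Ds)
  case (Cons D Ds)
  then have "bal D = 0" by (simp add: dyck_def)
  then show ?case using Cons by simp
qed simp

lemma H_Cons_Suc: "H (x # xs) (Suc t) = (if x then 1 else -1) + H xs t"
  by (simp add: H_def)

lemma zip_rep: "zip a (replicate (length a) True) = map (\<lambda>b. (b, True)) a"
  by (induction a) auto

lemma H_dyck_nonneg: "dyck D \<Longrightarrow> 0 \<le> H D t"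
  by (simp add: dyck_def H_def)

lemma Hcons: "dyck D \<Longrightarrow> H (D @ False # z') t = (if t \<le> length D then H D t else -1 + H z' (t - Suc (length D)))"
proof -
  assume d: "dyck D"
  have e: "D @ False # z' = (D @ [False]) @ z'" by simp
  show ?thesis
  proof (cases "t \<le> length D")
    case True then show ?thesis unfolding e by (simp add: H_append)
  next
    case False
    then have "t - length D = Suc (t - Suc (length D))" by simp
    then show ?thesis using d False unfolding e
      by (auto simp: H_append dyck_def H_ge H_Cons_Suc)
  qed
qed

lemma K_cz: "\<forall>D\<in>set Ds. dyck D \<Longrightarrow> K (cz Ds)"
proof (induction Ds)
  case Nil then show ?case by (simp add: K_def)
next
  case (Cons D Ds)
  have d: "dyck D" using Cons by simp
  let ?z = "cz Ds"
  have bz: "bal ?z = - int (length Ds)" using Cons bal_cz by simp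
  have Hn: "H (cz (D # Ds)) (length (cz (D # Ds))) = -1 + bal ?z"
    using d by (simp add: Hcons H_ge dyck_def)
  show ?case unfolding K_def
  proof (intro allI impI)
    fix t assume t: "t < length (cz (D # Ds))"
    show "H (cz (D # Ds)) (length (cz (D # Ds))) < H (cz (D # Ds)) t"
    proof (cases "t \<le> length D")
      case True
      then show ?thesis using Hn bz d H_dyck_nonneg[OF d, of t] by (simp add: Hcons)
    next
      case False
      then have t': "t - Suc (length D) < length ?z" using t by simp
      have "H ?z (length ?z) < H ?z (t - Suc (length D))" using Cons t' by (simp add: K_def)
      then show ?thesis using Hn False d by (simp add: Hcons H_ge)
    qed
  qed
qed

lemma char_cz: "\<forall>D\<in>set Ds. dyck D \<Longrightarrow> q < length (cz Ds) \<Longrightarrow>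
   (\<exists>t\<le>q. H (cz Ds) t \<le> H (cz Ds) (Suc q)) \<longleftrightarrow> fl Ds ! q"
proof (induction Ds arbitrary: q)
  case Nil then show ?case by simp
next
  case (Cons D Ds)
  have d: "dyck D" using Cons by simp
  let ?z = "cz (D # Ds)"
  consider "q < length D" | "q = length D" | "length D < q" by linarith
  then show ?case
  proof cases
    case 1
    have "H ?z 0 \<le> H ?z (Suc q)" using 1 d H_dyck_nonneg[OF d] by (simp add: Hcons)
    moreover have "fl (D # Ds) ! q" using 1 by (simp add: nth_append)
    ultimately show ?thesis by blast
  next
    case 2
    have "\<not> H ?z t \<le> H ?z (Suc q)" if "t \<le> q" for t
      using 2 that d H_dyck_nonneg[OF d, of t] by (simp add: Hcons dyck_def H_ge)
    moreover have "\<not> fl (D # Ds) ! q" using 2 by (simp add: nth_append)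
    ultimately show ?thesis by blast
  next
    case 3
    define q' where "q' = q - Suc (length D)"
    have q: "q = Suc (length D) + q'" using 3 q'_def by simp
    have q'l: "q' < length (cz Ds)" using Cons.prems q by simp
    have IH: "(\<exists>t\<le>q'. H (cz Ds) t \<le> H (cz Ds) (Suc q')) \<longleftrightarrow> fl Ds ! q'"
      using Cons q'l by simp
    have flq: "fl (D # Ds) ! q = fl Ds ! q'" using q by (simp add: nth_append)
    have HSq: "H ?z (Suc q) = -1 + H (cz Ds) (Suc q')" using q d by (simp add: Hcons)
    have "(\<exists>t\<le>q. H ?z t \<le> H ?z (Suc q)) \<longleftrightarrow> (\<exists>t\<le>q'. H (cz Ds) t \<le> H (cz Ds) (Suc q'))"
    proof
      assume "\<exists>t\<le>q. H ?z t \<le> H ?z (Suc q)"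
      then obtain t where t: "t \<le> q" "H ?z t \<le> H ?z (Suc q)" by blast
      show "\<exists>t\<le>q'. H (cz Ds) t \<le> H (cz Ds) (Suc q')"
      proof (cases "t \<le> length D")
        case True
        then have "0 \<le> H ?z t" using d H_dyck_nonneg[OF d, of t] by (simp add: Hcons)
        then show ?thesis using t HSq by (intro exI[of _ 0]) auto
      next
        case False
        then show ?thesis using t HSq q d
          by (intro exI[of _ "t - Suc (length D)"]) (auto simp: Hcons)
      qed
    next
      assume "\<exists>t\<le>q'. H (cz Ds) t \<le> H (cz Ds) (Suc q')"
      then obtain t where t: "t \<le> q'" "H (cz Ds) t \<le> H (cz Ds) (Suc q')" by blast
      show "\<exists>t\<le>q. H ?z t \<le> H ?z (Suc q)"
        using t HSq q d by (intro exI[of _ "Suc (length D) + t"]) (auto simp: Hcons)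
    qed
    then show ?thesis using IH flq by simp
  qed
qed

lemma matched_cz: "\<forall>D\<in>set Ds. dyck D \<Longrightarrow> matched (cz Ds) = {q. q < length (cz Ds) \<and> fl Ds ! q}"
proof -
  assume d: "\<forall>D\<in>set Ds. dyck D"
  show ?thesis unfolding matched_char(1)[OF K_cz[OF d]] using char_cz[OF d] by blast
qed

lemma ml_cz: "\<forall>D\<in>set Ds. dyck D \<Longrightarrow> i < length (cz Ds) \<Longrightarrow> cz Ds ! i \<Longrightarrow> 0 < match_len (cz Ds) i"
  using matched_char(2)[OF K_cz] by blast

lemma zip_cz_fl: "zip (cz Ds) (fl Ds) = G Ds"
  by (induction Ds) (auto simp: zip_append zip_rep)

lemma flags_cz: "\<forall>D\<in>set Ds. dyck D \<Longrightarrow> map (\<lambda>i. i \<in> matched (cz Ds)) [0..<length (cz Ds)] = fl Ds"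
  by (rule nth_equalityI) (auto simp: matched_cz length_fl)

lemma f_cz: "\<forall>D\<in>set Ds. dyck D \<Longrightarrow> f (cz Ds) = concat (map (\<lambda>D. map Not D @ [False]) Ds)"
proof -
  assume d: "\<forall>D\<in>set Ds. dyck D"
  have "f (cz Ds) = map (\<lambda>(b, m). if m then \<not> b else b) (zip (cz Ds) (fl Ds))"
    unfolding f_def by (rule nth_equalityI) (auto simp: matched_cz[OF d] length_fl)
  also have "\<dots> = concat (map (\<lambda>D. map Not D @ [False]) Ds)"
    unfolding zip_cz_fl by (induction Ds) auto
  finally show ?thesis .
qed



lemma mod_inv:
  fixes a r n :: nat
  assumes "a < n"
  shows "((a + r) mod n + (n - r mod n)) mod n = a"
proof -
  have rm: "r mod n < n" using assms by simp
  have e: "a + r + (n - r mod n) = a + (r div n + 1) * n"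
    using div_mult_mod_eq[of r n] rm by (simp only: distrib_right mult_1_left)
  have "((a + r) mod n + (n - r mod n)) mod n = (a + r + (n - r mod n)) mod n" by (rule mod_add_left_eq)
  also have "\<dots> = (a + (r div n + 1) * n) mod n" by (simp only: e)
  also have "\<dots> = a mod n" by (rule mod_mult_self1)
  also have "\<dots> = a" by (rule mod_less[OF assms])
  finally show ?thesis .
qed

lemma mod_inv2:
  fixes a r n :: nat
  assumes "a < n"
  shows "((a + (n - r mod n)) mod n + r) mod n = a"
proof -
  have rm: "r mod n < n" using assms by simp
  have e: "a + (n - r mod n) + r = a + (r div n + 1) * n"
    using div_mult_mod_eq[of r n] rm by (simp only: distrib_right mult_1_left)
  have "((a + (n - r mod n)) mod n + r) mod n = (a + (n - r mod n) + r) mod n" by (rule mod_add_left_eq)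
  also have "\<dots> = (a + (r div n + 1) * n) mod n" by (simp only: e)
  also have "\<dots> = a mod n" by (rule mod_mult_self1)
  also have "\<dots> = a" by (rule mod_less[OF assms])
  finally show ?thesis .
qed

lemma mod_shift_inj:
  fixes a b r n :: nat
  assumes "a < n" "b < n" "(a + r) mod n = (b + r) mod n"
  shows "a = b"
proof -
  have "a = ((a + r) mod n + (n - r mod n)) mod n" using mod_inv[OF assms(1), of r] by (rule sym)
  also have "\<dots> = ((b + r) mod n + (n - r mod n)) mod n" by (simp only: assms(3))
  also have "\<dots> = b" by (rule mod_inv[OF assms(2)])
  finally show ?thesis .
qed

lemma cyc_rot:
  assumes "i < length w"
  shows "cyc (rotate r w) i j = cyc w ((i + r) mod length w) j"
proof -
  have n: "0 < length w" using assms by linarith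
  show ?thesis unfolding cyc_def
  proof (rule nth_equalityI)
    fix t assume "t < length (map (\<lambda>t. rotate r w ! ((i + t) mod length (rotate r w))) [0..<j])"
    then have t: "t < j" by simp
    have "rotate r w ! ((i + t) mod length w) = w ! ((r + (i + t) mod length w) mod length w)"
      using n nth_rotate[of "(i + t) mod length w" w r] by simp
    also have "(r + (i + t) mod length w) mod length w = ((i + r) mod length w + t) mod length w"
    proof -
      have "(r + (i + t) mod length w) mod length w = (r + (i + t)) mod length w" by (rule mod_add_right_eq)
      also have "r + (i + t) = i + r + t" by simp
      also have "(i + r + t) mod length w = ((i + r) mod length w + t) mod length w" by (rule mod_add_left_eq[symmetric])
      finally show ?thesis .
    qed
    finally show "map (\<lambda>t. rotate r w ! ((i + t) mod length (rotate r w))) [0..<j] ! t =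
        map (\<lambda>t. w ! (((i + r) mod length w + t) mod length w)) [0..<j] ! t" using t by simp
  qed simp
qed

lemma ml_rot: "i < length w \<Longrightarrow> match_len (rotate r w) i = match_len w ((i + r) mod length w)"
  unfolding match_len_def by (simp add: cyc_rot)

lemma mp_rot:
  assumes i: "i < length w" and ml: "0 < match_len (rotate r w) i"
  shows "match_pos w ((i + r) mod length w) = (match_pos (rotate r w) i + r) mod length w"
proof -
  let ?n = "length w" and ?L = "match_len (rotate r w) i"
  have L: "match_len w ((i + r) mod ?n) = ?L" using ml_rot[OF i] by simp
  have "match_pos w ((i + r) mod ?n) = ((i + r) mod ?n + ?L - 1) mod ?n"
    unfolding match_pos_def L ..
  also have "\<dots> = ((i + r) mod ?n + (?L - 1)) mod ?n" using ml by simp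
  also have "\<dots> = (i + r + (?L - 1)) mod ?n" by (rule mod_add_left_eq)
  also have "i + r + (?L - 1) = i + (?L - 1) + r" by simp
  also have "(i + (?L - 1) + r) mod ?n = ((i + (?L - 1)) mod ?n + r) mod ?n" by (rule mod_add_left_eq[symmetric])
  also have "i + (?L - 1) = i + ?L - 1" using ml by simp
  finally show ?thesis unfolding match_pos_def by simp
qed

lemma nth_rot: "q < length w \<Longrightarrow> rotate r w ! q = w ! ((q + r) mod length w)"
  using nth_rotate[of q w r] by (simp add: add.commute)

lemma matched_rot:
  assumes ml: "\<And>i. i < length w \<Longrightarrow> rotate r w ! i \<Longrightarrow> 0 < match_len (rotate r w) i"
    and q: "q < length w"
  shows "q \<in> matched (rotate r w) \<longleftrightarrow> (q + r) mod length w \<in> matched w"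
proof -
  let ?n = "length w" and ?z = "rotate r w"
  have n: "0 < ?n" using q by linarith
  show ?thesis
  proof
    assume "q \<in> matched ?z"
    then consider "?z ! q" | i where "i < ?n" "?z ! i" "q = match_pos ?z i"
      unfolding matched_def by auto
    then show "(q + r) mod ?n \<in> matched w"
    proof cases
      case 1 then show ?thesis using q n unfolding matched_def by (auto simp: nth_rot)
    next
      case 2
      then have "(q + r) mod ?n = match_pos w ((i + r) mod ?n)" using mp_rot ml by simp
      moreover have "w ! ((i + r) mod ?n)" using 2 by (simp add: nth_rot)
      ultimately show ?thesis using n unfolding matched_def by auto
    qed
  next
    assume "(q + r) mod ?n \<in> matched w"
    then consider "w ! ((q + r) mod ?n)" | i' where "i' < ?n" "w ! i'" "(q + r) mod ?n = match_pos w i'"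
      unfolding matched_def by auto
    then show "q \<in> matched ?z"
    proof cases
      case 1 then show ?thesis using q unfolding matched_def by (auto simp: nth_rot)
    next
      case 2
      define i where "i = (i' + (?n - r mod ?n)) mod ?n"
      have i: "i < ?n" using n by (simp add: i_def)
      have ii: "(i + r) mod ?n = i'" unfolding i_def using mod_inv2 2 by blast
      have zi: "?z ! i" using 2 ii i by (simp add: nth_rot)
      have "(q + r) mod ?n = (match_pos ?z i + r) mod ?n"
        using 2 mp_rot[OF i ml[OF i zi]] ii by simp
      moreover have "match_pos ?z i < ?n" using n by (simp add: match_pos_def)
      ultimately have "q = match_pos ?z i" using mod_shift_inj q by blast
      then show ?thesis using i zi unfolding matched_def by auto
    qed
  qed
qed

lemma f_rot:
  assumes ml: "\<And>i. i < length w \<Longrightarrow> rotate r w ! i \<Longrightarrow> 0 < match_len (rotate r w) i"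
  shows "f (rotate r w) = rotate r (f w)"
proof (rule nth_equalityI)
  show "length (f (rotate r w)) = length (rotate r (f w))" by (simp add: f_def)
next
  fix q assume "q < length (f (rotate r w))"
  then have q: "q < length w" by (simp add: f_def)
  have m: "(q + r) mod length w < length w" by (rule mod_less_divisor) (use q in linarith)
  have "rotate r (f w) ! q = f w ! ((q + r) mod length w)"
    using q nth_rot[of q "f w" r] by (simp add: f_def)
  also have "\<dots> = (if (q + r) mod length w \<in> matched w then \<not> w ! ((q + r) mod length w) else w ! ((q + r) mod length w))"
    using m unfolding f_def by simp
  also have "\<dots> = (if q \<in> matched (rotate r w) then \<not> rotate r w ! q else rotate r w ! q)"
    using matched_rot[OF ml q] nth_rot[of q w r, OF q] by simp
  also have "\<dots> = f (rotate r w) ! q" using q unfolding f_def by simp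
  finally show "f (rotate r w) ! q = rotate r (f w) ! q" by simp
qed



lemma runs_split: "runs (xs @ (b, False) # ys) acc = runs xs acc @ runs ys []"
proof (induction xs arbitrary: acc)
  case Nil then show ?case by simp
next
  case (Cons x xs)
  obtain b' m where x: "x = (b', m)" by (cases x)
  show ?case using Cons x by (cases m) auto
qed

lemma runs_true: "runs (map (\<lambda>b. (b, True)) D) acc = (if D = [] \<and> acc = [] then [] else [rev acc @ D])"
  by (induction D arbitrary: acc) auto

definition RS :: "(bool \<times> bool) list \<Rightarrow> nat multiset" where
  "RS l = sum_list (map Wd (runs l []))"

lemma RS_G: "RS (G Ds) = sum_list (map Wd Ds)"
proof (induction Ds)
  case Nil then show ?case by (simp add: RS_def)
next
  case (Cons D Ds)
  have "runs (G (D # Ds)) [] = runs (map (\<lambda>b. (b, True)) D) [] @ runs (G Ds) []"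
    by (simp add: runs_split)
  then show ?case using Cons by (simp add: RS_def runs_true)
qed

lemma G_last: "Ds \<noteq> [] \<Longrightarrow> last (G Ds) = (False, False)"
proof (induction Ds)
  case (Cons D Ds) then show ?case by (cases "Ds = []") auto
qed simp

lemma RS_append: "RS (xs @ (b, False) # ys) = RS xs + RS ys"
  by (simp add: RS_def runs_split)

lemma RS_rot:
  assumes ne: "Ds \<noteq> []" and p: "p < length (G Ds)" and Gp: "G Ds ! p = (False, False)"
  shows "RS (rotate p (G Ds)) = sum_list (map Wd Ds)"
proof -
  let ?L = "G Ds"
  let ?X = "take p ?L" and ?Y = "drop (Suc p) ?L"
  have L: "?L = ?X @ (False, False) # ?Y" using id_take_nth_drop[OF p] Gp by simp
  have rot: "rotate p ?L = (False, False) # ?Y @ ?X"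
    using p Gp by (simp add: rotate_drop_take Cons_nth_drop_Suc[OF p, symmetric])
  have YX: "RS (?Y @ ?X) = RS ?Y + RS ?X"
  proof (cases "?Y = []")
    case True then show ?thesis by (simp add: RS_def)
  next
    case False
    have "last ?Y = last ?L" using False by (simp add: last_drop)
    then have lY: "last ?Y = (False, False)" using G_last[OF ne] by simp
    have Y: "?Y = butlast ?Y @ [(False, False)]" using False lY append_butlast_last_id[of ?Y] by simp
    have "RS (?Y @ ?X) = RS (butlast ?Y @ (False, False) # ?X)" by (subst Y) simp
    also have "\<dots> = RS (butlast ?Y) + RS ?X" by (rule RS_append)
    finally have 1: "RS (?Y @ ?X) = RS (butlast ?Y) + RS ?X" .
    have "RS ?Y = RS (butlast ?Y @ (False, False) # [])" by (subst Y) simp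
    also have "\<dots> = RS (butlast ?Y) + RS []" by (rule RS_append)
    finally have 2: "RS ?Y = RS (butlast ?Y)" by (simp add: RS_def)
    show ?thesis using 1 2 by simp
  qed
  have "RS (rotate p ?L) = RS ([] @ (False, False) # ?Y @ ?X)" using rot by simp
  also have "\<dots> = RS ?Y + RS ?X" using YX by (simp add: RS_append RS_def)
  also have "\<dots> = RS ?L" using L RS_append[of ?X False ?Y] by (simp add: add.commute)
  also have "\<dots> = sum_list (map Wd Ds)" by (rule RS_G)
  finally show ?thesis .
qed

lemma fl_last: "Ds \<noteq> [] \<Longrightarrow> last (fl Ds) = False"
proof (induction Ds)
  case (Cons D Ds) then show ?case by (cases "Ds = []") auto
qed simp

lemma DL:
  assumes ne: "Ds \<noteq> []" and d: "\<forall>D\<in>set Ds. dyck D" and rw: "rotate r w = cz Ds"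
  shows "W w = sum_list (map Wd Ds) \<and> rotate r (f w) = concat (map (\<lambda>D. map Not D @ [False]) Ds)"
proof -
  let ?n = "length w" and ?z = "rotate r w"
  have lz: "length (cz Ds) = ?n" using rw[symmetric] by simp
  have n: "0 < ?n" using ne lz by (cases Ds) auto
  have mlz: "\<And>i. i < ?n \<Longrightarrow> ?z ! i \<Longrightarrow> 0 < match_len ?z i"
    using ml_cz[OF d] rw lz by simp
  have F: "rotate r (f w) = concat (map (\<lambda>D. map Not D @ [False]) Ds)"
    using f_rot[OF mlz] f_cz[OF d] rw by simp
  have mz: "matched ?z = {q. q < ?n \<and> fl Ds ! q}" using matched_cz[OF d] rw lz by simp
  have mrot: "\<And>q. q < ?n \<Longrightarrow> q \<in> matched ?z \<longleftrightarrow> (q + r) mod ?n \<in> matched w"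
    using matched_rot[OF mlz] by blast
  have lf: "fl Ds ! (?n - 1) = False"
    using fl_last[OF ne] length_fl[of Ds] lz n by (metis last_conv_nth length_0_conv neq0_conv)
  have "?n - 1 \<notin> matched ?z" using mz lf by simp
  moreover have "?n - 1 < ?n" using n by simp
  ultimately have u0: "(?n - 1 + r) mod ?n \<notin> matched w" using mrot by blast
  define u where "u = (LEAST i. i < ?n \<and> i \<notin> matched w)"
  have Pu: "u < ?n \<and> u \<notin> matched w" unfolding u_def
    by (rule LeastI[of _ "(?n - 1 + r) mod ?n"]) (use u0 mod_less_divisor[OF n] in blast)
  define p where "p = (u + (?n - r mod ?n)) mod ?n"
  have p: "p < ?n" using n by (simp add: p_def)
  have pr: "(p + r) mod ?n = u" unfolding p_def using mod_inv2 Pu by blast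
  have pz: "p \<notin> matched ?z" using mrot[OF p] pr Pu by simp
  have zp: "\<not> ?z ! p" using pz p unfolding matched_def by auto
  let ?fw = "map (\<lambda>i. i \<in> matched w) [0..<?n]"
  let ?fz = "map (\<lambda>i. i \<in> matched ?z) [0..<length ?z]"
  have fz: "?fz = fl Ds" using flags_cz[OF d] rw by simp
  have zip: "zip ?z ?fz = G Ds" using fz rw zip_cz_fl by simp
  have Rot: "rotate u (zip w ?fw) = rotate p (zip ?z ?fz)"
  proof (rule nth_equalityI)
    show "length (rotate u (zip w ?fw)) = length (rotate p (zip ?z ?fz))" by simp
  next
    fix i assume "i < length (rotate u (zip w ?fw))"
    then have i: "i < ?n" by simp
    define j where "j = (i + p) mod ?n"
    have j: "j < ?n" using n by (simp add: j_def)
    have ju: "(j + r) mod ?n = (i + u) mod ?n"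
    proof -
      have "(j + r) mod ?n = (i + p + r) mod ?n" unfolding j_def by (rule mod_add_left_eq)
      also have "\<dots> = (i + (p + r)) mod ?n" by (simp add: add.assoc)
      also have "\<dots> = (i + (p + r) mod ?n) mod ?n" by (rule mod_add_right_eq[symmetric])
      finally show ?thesis using pr by simp
    qed
    have iu: "(i + u) mod ?n < ?n" using n by simp
    have "rotate u (zip w ?fw) ! i = zip w ?fw ! ((i + u) mod ?n)"
      using nth_rot[of i "zip w ?fw" u] i by simp
    also have "\<dots> = (w ! ((i + u) mod ?n), (i + u) mod ?n \<in> matched w)" using iu by simp
    also have "\<dots> = (?z ! j, j \<in> matched ?z)" using mrot[OF j] ju nth_rot[OF j, of r] by simp
    also have "\<dots> = zip ?z ?fz ! j" using j by simp
    also have "\<dots> = rotate p (zip ?z ?fz) ! i"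
      using nth_rot[of i "zip ?z ?fz" p] i j_def by simp
    finally show "rotate u (zip w ?fw) ! i = rotate p (zip ?z ?fz) ! i" .
  qed
  have Gp: "G Ds ! p = (False, False)"
  proof -
    have "G Ds ! p = zip ?z ?fz ! p" using zip by simp
    also have "\<dots> = (?z ! p, p \<in> matched ?z)" using p by simp
    finally show ?thesis using zp pz by simp
  qed
  have lG: "p < length (G Ds)" using zip p by (metis length_map length_rotate length_upt length_zip min.idem minus_nat.diff_0)
  have "blocks w = runs (rotate u (zip w ?fw)) []" unfolding blocks_def u_def Let_def ..
  then have "W w = RS (rotate p (G Ds))" unfolding W_def RS_def using Rot zip by simp
  also have "\<dots> = sum_list (map Wd Ds)" by (rule RS_rot[OF ne lG Gp])
  finally show ?thesis using F by simp
qed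



lemma count_rotate: "count_list (rotate r xs) a = count_list xs a"
proof -
  have "count_list xs a = count_list (take (r mod length xs) xs) a + count_list (drop (r mod length xs) xs) a"
    by (metis append_take_drop_id count_list_append)
  then show ?thesis by (simp add: rotate_drop_take)
qed

lemma bal_rotate: "bal (rotate r xs) = bal xs"
  using count_rotate[of r xs True] count_rotate[of r xs False] by (simp add: bal_count)

lemma H_drop: "s \<le> length u \<Longrightarrow> H (drop s u) t = H u (s + t) - H u s"
proof -
  have "take (s + t) u = take s u @ take t (drop s u)" by (simp add: take_add)
  then show ?thesis by (simp add: H_def)
qed

lemma H_take: "t \<le> s \<Longrightarrow> H (take s u) t = H u t"
  by (simp add: H_def min_def)

lemma cycle_lemma:
  assumes "2 * ones u < length u"
  shows "\<exists>s. K (rotate s u)"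
proof -
  let ?n = "length u"
  have n: "0 < ?n" using assms by linarith
  have bu: "bal u < 0" using assms bal_count[of u] count_len[of u] by linarith
  define M where "M = Min (H u ` {..<?n})"
  have fin: "finite (H u ` {..<?n})" by simp
  have ne: "H u ` {..<?n} \<noteq> {}" using n by auto
  have "M \<in> H u ` {..<?n}" unfolding M_def using fin ne by (rule Min_in)
  then obtain s0 where s0: "s0 < ?n" "H u s0 = M" by auto
  have Mle: "\<And>t. t < ?n \<Longrightarrow> M \<le> H u t" unfolding M_def using fin by auto
  define s where "s = (LEAST s. s < ?n \<and> H u s = M)"
  have Ps: "s < ?n \<and> H u s = M" unfolding s_def by (rule LeastI[of _ s0]) (use s0 in blast)
  have lt: "\<And>t. t < s \<Longrightarrow> M < H u t"
  proof -
    fix t assume t: "t < s"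
    then have "\<not> (t < ?n \<and> H u t = M)" unfolding s_def by (rule not_less_Least)
    then show "M < H u t" using t Ps Mle[of t] by auto
  qed
  let ?z = "rotate s u"
  have z: "?z = drop s u @ take s u" using Ps by (simp add: rotate_drop_take)
  have Hn: "H ?z (length ?z) = bal u" by (simp add: H_ge bal_rotate)
  have bd: "bal u = bal (take s u) + bal (drop s u)" by (metis append_take_drop_id bal_append)
  have "K ?z" unfolding K_def
  proof (intro allI impI)
    fix t assume t: "t < length ?z"
    then have t: "t < ?n" by simp
    show "H ?z (length ?z) < H ?z t"
    proof (cases "t \<le> ?n - s")
      case True
      then have Ht: "H ?z t = H u (s + t) - M" using Ps z by (simp add: H_append H_drop)
      show ?thesis
      proof (cases "s + t < ?n")
        case True then show ?thesis using Ht Mle[of "s + t"] Hn bu by simp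
      next
        case False
        then have "s + t = ?n" using \<open>t \<le> ?n - s\<close> Ps by linarith
        then have "0 < s" using t by simp
        then have "M < 0" using lt[of 0] by simp
        then show ?thesis using Ht Hn \<open>s + t = ?n\<close> by (simp add: H_ge)
      qed
    next
      case False
      define t' where "t' = t - (?n - s)"
      have t's: "t' < s" using t False t'_def by simp
      have Ht: "H ?z t = H u ?n - M + H u t'"
        using Ps z False t's bd by (simp add: H_append H_take t'_def) (simp add: H_def)
      then show ?thesis using lt[OF t's] Hn by (simp add: H_ge)
    qed
  qed
  then show ?thesis by blast
qed

lemma decomp:
  "K z \<Longrightarrow> z \<noteq> [] \<Longrightarrow> \<exists>Ds. Ds \<noteq> [] \<and> (\<forall>D\<in>set Ds. dyck D) \<and> z = cz Ds"
proof (induction "length z" arbitrary: z rule: less_induct)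
  case less
  let ?n = "length z"
  have n: "0 < ?n" using less.prems by simp
  have Hn: "H z ?n < 0" using less.prems(1) n unfolding K_def by fastforce
  define j where "j = (LEAST j. H z (Suc j) < 0)"
  have wit: "H z (Suc (?n - 1)) < 0" using Hn n by simp
  have Pj: "H z (Suc j) < 0" unfolding j_def by (rule LeastI[of _ "?n - 1"]) (rule wit)
  have jle: "j \<le> ?n - 1" unfolding j_def by (rule Least_le) (rule wit)
  then have jn: "j < ?n" using n by linarith
  have nn: "\<And>t. t \<le> j \<Longrightarrow> 0 \<le> H z t"
  proof -
    fix t assume t: "t \<le> j"
    show "0 \<le> H z t"
    proof (cases t)
      case (Suc t')
      then have "t' < j" using t by simp
      then have "\<not> H z (Suc t') < 0" unfolding j_def by (rule not_less_Least)
      then show ?thesis using Suc by simp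
    qed simp
  qed
  have Hj: "H z j = 0" and zj: "\<not> z ! j"
    using nn[of j] Pj H_Suc[OF jn] by (auto split: if_splits)
  define D where "D = take j z"
  define z' where "z' = drop (Suc j) z"
  have zD: "z = D @ False # z'" unfolding D_def z'_def using id_take_nth_drop[OF jn] zj by simp
  have lD: "length D = j" unfolding D_def using jn by simp
  have dD: "dyck D"
  proof -
    have "bal D = 0" using Hj unfolding D_def H_def .
    moreover have "0 \<le> bal (take t D)" for t
      using nn[of "min t j"] unfolding D_def H_def by (simp add: min_def)
    ultimately show ?thesis by (simp add: dyck_def)
  qed
  show ?case
  proof (cases "z' = []")
    case True
    then have "z = cz [D]" using zD by simp
    then show ?thesis using dD by (intro exI[of _ "[D]"]) simp
  next
    case False
    have Hz: "\<And>t'. H z (Suc j + t') = -1 + H z' t'"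
      using zD dD lD by (simp add: Hcons)
    have "K z'" unfolding K_def
    proof (intro allI impI)
      fix t' assume t': "t' < length z'"
      have "H z ?n < H z (Suc j + t')" using less.prems(1) t' zD lD unfolding K_def by simp
      moreover have "?n = Suc j + length z'" using zD lD by simp
      ultimately show "H z' (length z') < H z' t'" using Hz by simp
    qed
    moreover have "length z' < ?n" using zD by simp
    ultimately obtain Ds where Ds: "Ds \<noteq> []" "\<forall>D\<in>set Ds. dyck D" "z' = cz Ds"
      using less.hyps False by blast
    then show ?thesis using zD dD by (intro exI[of _ "D # Ds"]) simp
  qed
qed

lemma exists_decomp:
  assumes "2 * ones u < length u"
  shows "\<exists>r Ds. Ds \<noteq> [] \<and> (\<forall>D\<in>set Ds. dyck D) \<and> rotate r u = cz Ds"
proof -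
  obtain s where "K (rotate s u)" using cycle_lemma[OF assms] by blast
  moreover have "rotate s u \<noteq> []" using assms by auto
  ultimately show ?thesis using decomp by blast
qed



definition Ws :: "bool list list \<Rightarrow> nat multiset" where "Ws Ds = sum_list (map Wd Ds)"
definition onesL :: "bool list list \<Rightarrow> nat" where "onesL Ds = sum_list (map (\<lambda>D. ones D) Ds)"
definition ccz :: "bool list list \<Rightarrow> bool list" where
  "ccz Ds = concat (map (\<lambda>D. map Not D @ [False]) Ds)"

lemma ccz_Nil[simp]: "ccz [] = []" and ccz_Cons[simp]: "ccz (D # Ds) = map Not D @ False # ccz Ds"
  by (auto simp: ccz_def)

lemma count_map_Not: "count_list (map Not D) True = count_list D False"
  by (induction D) auto

lemma dyck_ones_eq: "dyck D \<Longrightarrow> count_list D False = ones D"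
  using dyck_ones[of D] count_len[of D] by simp

lemma ones_cz: "ones (cz Ds) = onesL Ds"
  by (induction Ds) (auto simp: onesL_def)

lemma ones_ccz: "\<forall>D\<in>set Ds. dyck D \<Longrightarrow> ones (ccz Ds) = onesL Ds"
  by (induction Ds) (auto simp: onesL_def count_map_Not dyck_ones_eq)

lemma length_ccz: "\<forall>D\<in>set Ds. dyck D \<Longrightarrow> length (ccz Ds) = 2 * onesL Ds + length Ds"
  by (induction Ds) (auto simp: onesL_def dyck_ones[symmetric])

lemma Rl_Cons_False[simp]: "Rl (False # xs) = False # Rl xs" by simp

lemma Rl_cz: "\<forall>D\<in>set Ds. dyck D \<Longrightarrow> Rl (cz Ds) = cz (map Rl Ds)"
proof (induction Ds)
  case (Cons D Ds)
  have "Rl (D @ False # cz Ds) = Rl D @ Rl (False # cz Ds)"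
    using Cons dyck_last[of D] by (intro Rl_append) auto
  then show ?case using Cons by simp
qed simp

lemma Rl_ccz: "\<forall>D\<in>set Ds. dyck D \<Longrightarrow> Rl (ccz Ds) = concat (map (\<lambda>D. False # map Not (Rl D)) Ds)"
proof (induction Ds)
  case (Cons D Ds)
  have "Rl ((map Not D @ [False]) @ ccz Ds) = Rl (map Not D @ [False]) @ Rl (ccz Ds)"
    by (intro Rl_append) simp
  moreover have "Rl (map Not D @ [False]) = False # map Not (Rl D)"
    using Cons dyck_hd[of D] by (intro Rl_compl) auto
  ultimately show ?case using Cons by simp
qed simp

lemma concat_shift: "concat (map ((#) a) Xs) @ [a] = a # concat (map (\<lambda>X. X @ [a]) Xs)"
  by (induction Xs) auto

lemma rotate1_shift: "Xs \<noteq> [] \<Longrightarrow> rotate 1 (concat (map ((#) a) Xs)) = concat (map (\<lambda>X. X @ [a]) Xs)"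
proof -
  assume "Xs \<noteq> []"
  then obtain X Ys where "Xs = X # Ys" by (cases Xs) auto
  then have "concat (map ((#) a) Xs) = a # (X @ concat (map ((#) a) Ys))" by simp
  then have "rotate 1 (concat (map ((#) a) Xs)) = X @ concat (map ((#) a) Ys) @ [a]" by simp
  also have "\<dots> = concat (map (\<lambda>X. X @ [a]) Xs)" using \<open>Xs = X # Ys\<close> concat_shift[of a Ys] by simp
  finally show ?thesis .
qed

lemma Rl_rot:
  assumes v: "v \<noteq> []" "\<not> last v" and lr: "\<not> last (rotate s v)"
  shows "\<exists>t. Rl (rotate s v) = rotate t (Rl v)"
proof -
  let ?k = "s mod length v"
  let ?a = "take ?k v" and ?b = "drop ?k v"
  show ?thesis
  proof (cases "?k = 0")
    case True then show ?thesis by (intro exI[of _ 0]) simp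
  next
    case False
    have k: "?k < length v" using v by simp
    have ane: "?a \<noteq> []" using False v by simp
    have bne: "?b \<noteq> []" using k by simp
    have rs: "rotate s v = ?b @ ?a" by (simp add: rotate_drop_take)
    have la: "\<not> last ?a" using lr rs ane by simp
    have lb: "\<not> last ?b" using v bne by (metis append_take_drop_id last_appendR)
    have "Rl v = Rl (?a @ ?b)" by simp
    also have "\<dots> = Rl ?a @ Rl ?b" using la by (intro Rl_append) simp
    finally have 1: "Rl v = Rl ?a @ Rl ?b" .
    have 2: "Rl (rotate s v) = Rl ?b @ Rl ?a" using rs lb by (simp add: Rl_append)
    show ?thesis using 1 2 rotate_append[of "Rl ?a" "Rl ?b"] by metis
  qed
qed

lemma WsR: "\<forall>D\<in>set Ds. dyck D \<Longrightarrow>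
  Ws Ds = Phi (Ws (map Rl Ds)) (onesL Ds - onesL (map Rl Ds) - size (Ws (map Rl Ds))) \<and>
  onesL (map Rl Ds) + size (Ws (map Rl Ds)) \<le> onesL Ds"
proof (induction Ds)
  case Nil then show ?case by (simp add: Ws_def onesL_def Phi_def)
next
  case (Cons D Ds)
  have R: "ones (Rl D) + size (Wd (Rl D)) \<le> ones D"
      "Wd D = Phi (Wd (Rl D)) (ones D - ones (Rl D) - size (Wd (Rl D)))"
    using R2[of D] Cons by auto
  have IH: "Ws Ds = Phi (Ws (map Rl Ds)) (onesL Ds - onesL (map Rl Ds) - size (Ws (map Rl Ds)))"
      "onesL (map Rl Ds) + size (Ws (map Rl Ds)) \<le> onesL Ds" using Cons by auto
  have "Ws (D # Ds) = Phi (Wd (Rl D)) (ones D - ones (Rl D) - size (Wd (Rl D))) +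
       Phi (Ws (map Rl Ds)) (onesL Ds - onesL (map Rl Ds) - size (Ws (map Rl Ds)))"
    using R IH by (simp add: Ws_def)
  also have "\<dots> = Phi (Wd (Rl D) + Ws (map Rl Ds)) ((ones D - ones (Rl D) - size (Wd (Rl D))) +
       (onesL Ds - onesL (map Rl Ds) - size (Ws (map Rl Ds))))" by (simp add: Phi_add)
  also have "(ones D - ones (Rl D) - size (Wd (Rl D))) + (onesL Ds - onesL (map Rl Ds) - size (Ws (map Rl Ds)))
      = onesL (D # Ds) - onesL (map Rl (D # Ds)) - size (Ws (map Rl (D # Ds)))"
    using R IH by (simp add: onesL_def Ws_def)
  finally show ?case using R IH by (simp add: onesL_def Ws_def)
qed

lemma Rl_lt: "dyck D \<Longrightarrow> D \<noteq> [] \<Longrightarrow> ones (Rl D) < ones D"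
proof -
  assume d: "dyck D" and ne: "D \<noteq> []"
  have R: "dyck (Rl D)" "ones (Rl D) + size (Wd (Rl D)) \<le> ones D" using R2[OF d] by auto
  show ?thesis
  proof (cases "Rl D = []")
    case True then show ?thesis using ones_dyck_pos[OF d ne] by simp
  next
    case False
    then have "Wd (Rl D) \<noteq> {#}" using Wd_nonempty R by blast
    then have "0 < size (Wd (Rl D))" by (cases "Wd (Rl D)") auto
    then show ?thesis using R by simp
  qed
qed

lemma onesL_Rl_lt: "\<forall>D\<in>set Ds. dyck D \<Longrightarrow> 0 < onesL Ds \<Longrightarrow> onesL (map Rl Ds) < onesL Ds"
proof (induction Ds)
  case Nil then show ?case by (simp add: onesL_def)
next
  case (Cons D Ds)
  have le: "ones (Rl D) \<le> ones D" by (rule ones_Rl_le)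
  have le2: "onesL (map Rl Ds) \<le> onesL Ds"
    using WsR[of Ds] Cons.prems by auto
  show ?case
  proof (cases "D = []")
    case True
    then show ?thesis using Cons by (simp add: onesL_def)
  next
    case False
    then have "ones (Rl D) < ones D" using Rl_lt Cons.prems by simp
    then show ?thesis using le2 by (simp add: onesL_def)
  qed
qed

lemma Ws_zero: "\<forall>D\<in>set Ds. dyck D \<Longrightarrow> onesL Ds = 0 \<Longrightarrow> Ws Ds = {#}"
proof (induction Ds)
  case (Cons D Ds)
  have "D = []" using Cons.prems ones_dyck_pos[of D] by (cases "D = []") (auto simp: onesL_def)
  then show ?case using Cons by (simp add: Ws_def onesL_def)
qed (simp add: Ws_def)



lemma last_ccz: "Ds \<noteq> [] \<Longrightarrow> \<not> last (ccz Ds)"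
proof (induction Ds)
  case (Cons D Ds) then show ?case by (cases "Ds = []") auto
qed simp

lemma last_cz: "Ds \<noteq> [] \<Longrightarrow> \<not> last (cz Ds)"
proof (induction Ds)
  case (Cons D Ds) then show ?case by (cases "Ds = []") auto
qed simp

lemma core:
  "\<forall>w r Ds. Ds \<noteq> [] \<longrightarrow> (\<forall>D\<in>set Ds. dyck D) \<longrightarrow> rotate r w = cz Ds \<longrightarrow> onesL Ds = k
     \<longrightarrow> W (f w) = W w"
proof (induction k rule: less_induct)
  case (less k)
  show ?case
  proof (intro allI impI)
    fix w r Ds
    assume ne: "Ds \<noteq> []" and d: "\<forall>D\<in>set Ds. dyck D" and rw: "rotate r w = cz Ds" and ok: "onesL Ds = k"
    have Ww: "W w = Ws Ds" and Fw: "rotate r (f w) = ccz Ds"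
      using DL[OF ne d rw] by (auto simp: Ws_def ccz_def)
    let ?v = "ccz Ds"
    have lv: "2 * ones ?v < length ?v" using ones_ccz[OF d] length_ccz[OF d] ne by simp
    obtain s Es where Es: "Es \<noteq> []" "\<forall>E\<in>set Es. dyck E" "rotate s ?v = cz Es"
      using exists_decomp[OF lv] by blast
    have "rotate (s + r) (f w) = cz Es" using Es(3) Fw rotate_rotate[of s r "f w"] by simp
    then have Wf: "W (f w) = Ws Es" using DL[OF Es(1,2)] by (simp add: Ws_def)
    have okE: "onesL Es = k"
      using ones_cz[of Es] Es(3) count_rotate[of s ?v True] ones_ccz[OF d] ok by simp
    show "W (f w) = W w"
    proof (cases "k = 0")
      case True
      then show ?thesis using Ws_zero[OF d] Ws_zero[OF Es(2)] ok okE Wf Ww by simp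
    next
      case False
      let ?Ds' = "map Rl Ds" and ?Es' = "map Rl Es"
      have d': "\<forall>D\<in>set ?Ds'. dyck D" using d R2 by auto
      have e': "\<forall>D\<in>set ?Es'. dyck D" using Es(2) R2 by auto
      have ne': "?Ds' \<noteq> []" using ne by simp
      have neE': "?Es' \<noteq> []" using Es(1) by simp
      let ?w' = "cz ?Ds'"
      have DLw': "W ?w' = Ws ?Ds' \<and> f ?w' = ccz ?Ds'"
        using DL[OF ne' d', of 0 ?w'] by (simp add: Ws_def ccz_def)
      have lt: "onesL ?Ds' < k" using onesL_Rl_lt[OF d] ok False by simp
      have IH: "W (f ?w') = W ?w'"
      proof -
        have "rotate 0 ?w' = cz ?Ds'" by simp
        then show ?thesis using less.IH[OF lt] ne' d' by blast
      qed
      let ?A = "Rl ?v"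
      have A: "?A = concat (map ((#) False) (map (\<lambda>D. map Not (Rl D)) Ds))"
        using Rl_ccz[OF d] by (simp add: o_def)
      have "rotate 1 ?A = concat (map (\<lambda>X. X @ [False]) (map (\<lambda>D. map Not (Rl D)) Ds))"
        unfolding A by (rule rotate1_shift) (use ne in simp)
      also have "\<dots> = ccz ?Ds'" by (simp add: ccz_def o_def)
      finally have rA: "rotate 1 ?A = f ?w'" using DLw' by simp
      have Ane: "?A \<noteq> []" using A ne by (cases Ds) auto
      have "rotate (length ?A - 1) (f ?w') = rotate (length ?A - 1) (rotate 1 ?A)"
        using rA by simp
      also have "\<dots> = rotate (length ?A - 1 + 1) ?A" by (rule rotate_rotate)
      also have "\<dots> = ?A" using Ane by simp
      finally have Av: "?A = rotate (length ?A - 1) (f ?w')" by simp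
      have vne: "?v \<noteq> []" using ne by (cases Ds) auto
      have "\<not> last (rotate s ?v)" using Es(3) last_cz[OF Es(1)] by simp
      then obtain t where t: "Rl (rotate s ?v) = rotate t ?A"
        using Rl_rot[OF vne last_ccz[OF ne]] by blast
      have "rotate (t + (length ?A - 1)) (f ?w') = cz ?Es'"
        using t Es(3) Rl_cz[OF Es(2)] Av by (metis rotate_rotate)
      then have WE': "W (f ?w') = Ws ?Es'" using DL[OF neE' e'] by (simp add: Ws_def)
      have onesE': "onesL ?Es' = onesL ?Ds'"
      proof -
        have "onesL ?Es' = ones (cz ?Es')" by (simp add: ones_cz)
        also have "\<dots> = ones (f ?w')"
          using \<open>rotate (t + (length ?A - 1)) (f ?w') = cz ?Es'\<close> count_rotate by metis
        also have "\<dots> = onesL ?Ds'" using DLw' ones_ccz[OF d'] by simp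
        finally show ?thesis .
      qed
      have WsE: "Ws ?Es' = Ws ?Ds'" using WE' IH DLw' by simp
      have "Ws Es = Ws Ds" using WsR[OF Es(2)] WsR[OF d] WsE onesE' okE ok by simp
      then show ?thesis using Wf Ww by simp
    qed
  qed
qed

lemma step:
  assumes "2 * ones x < length x"
  shows "W (f x) = W x \<and> length (f x) = length x \<and> ones (f x) = ones x"
proof -
  obtain r Ds where Ds: "Ds \<noteq> []" "\<forall>D\<in>set Ds. dyck D" "rotate r x = cz Ds"
    using exists_decomp[OF assms] by blast
  have W: "W (f x) = W x" using core Ds by blast
  have "rotate r (f x) = ccz Ds" using DL[OF Ds] by (simp add: ccz_def)
  then have "ones (f x) = onesL Ds" using ones_ccz[OF Ds(2)] count_rotate by metis
  also have "\<dots> = ones x" using ones_cz[of Ds] Ds(3) count_rotate by metis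
  finally show ?thesis using W by (simp add: f_def)
qed

theorem mainTheorem9:
  fixes n k :: nat and x :: "bool list"
  assumes "k \<ge> 1" and "n \<ge> 2 * k + 1" and "x \<in> bin_strings n k"
  shows "W (f x) = W x \<and> (\<forall>m. W ((f ^^ m) x) = W x)"
proof -
  have x: "length x = n" "ones x = k" using assms(3) by (auto simp: bin_strings_def)
  have lt: "2 * ones x < length x" using x assms(2) by simp
  have P: "W ((f ^^ m) x) = W x \<and> length ((f ^^ m) x) = n \<and> ones ((f ^^ m) x) = k" for m
  proof (induction m)
    case 0 then show ?case using x by simp
  next
    case (Suc m)
    then have "2 * ones ((f ^^ m) x) < length ((f ^^ m) x)" using x assms(2) by simp
    from step[OF this] Suc show ?case by simp
  qed
  show ?thesis using step[OF lt] P by blast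
qed

end
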